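(* Let $\kappa$ be a regular infinite cardinal and let $\langle W^\kappa,(T_i)_{i\in\{a,b\}},\theta\rangle$ be the $*$-type space on $S=\{h,t\}$ for players $\{a,b\}$ described in the context. For every ordinal $\alpha<\kappa$ there are $u^\kappa,w^\kappa\in W^\kappa$ such that (1) for every $\kappa$-expression $\varphi$ with $\mathrm{dp}(\varphi)\le\alpha$, $u^\kappa\in\varphi^{W^\kappa}$ iff $w^\kappa\in\varphi^{W^\kappa}$; and (2) there is a $\kappa$-expression $\psi$ with $\mathrm{dp}(\psi)=\alpha+1$ such that $u^\kappa\in\psi^{W^\kappa}$ and $w^\kappa\in(\neg\psi)^{W^\kappa}$.
   Context: Records: for $\alpha\ge1$, a record of length $\alpha$ is $r\in\{0,1\}^\alpha$ such that for every limit $\lambda\le\alpha$ there is $\gamma<\lambda$ with $r(\beta)=0$ for $\gamma\le\beta<\lambda$. Parity: finite ordinals usual (0 even); infinite $\hat\lambda+n$ ($\hat\lambda$ limit) has the parity of $n$. For limit $\lambda\le\alpha$, $o^\lambda(r)$ is the least ordinal $<\lambda$ after which $r$ is $0$ below $\lambda$; $\lambda\text{-par}(r)$ is its parity. $W^0=\{h,t\}$; $W^\alpha$ ($\alpha\ge1$) = triples $(w_0,w_a^\alpha,w_b^\alpha)$, $w_0\in\{h,t\}$, $w_a^\alpha,w_b^\alpha$ records of length $\alpha$; $w^\alpha\upharpoonright\beta$ restricts both records (and $w^\alpha\upharpoonright0=w_0$); $\pi_{\beta,\alpha}(w^\alpha)=w^\alpha\upharpoonright\beta$. For $i\in\{a,b\}$,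 $j$ the other player, $P_i(w^\alpha)$: set of $v^\alpha$ with $v_i^\alpha=w_i^\alpha$; $w_i^\alpha(0)=1\Rightarrow v_0=w_0$; $w_i^\alpha(\beta+1)=1\Rightarrow v_j^\alpha(\beta)=w_j^\alpha(\beta)$ ($\beta+1<\alpha$); $w_i^\alpha(\lambda)=1\Rightarrow\lambda\text{-par}(v_j^\alpha)=\lambda\text{-par}(w_j^\alpha)$ (limit $\lambda<\alpha$). $T_a,T_b$ map $W^\kappa$ into finitely additive probability measures on $\mathrm{Pow}(W^\kappa)$ and satisfy for all $w^\kappa$: (a) $T_i$ constant on $P_i(w^\kappa)$; (b) $T_i(w^\kappa)(P_i(w^\kappa))=1$; (c) $T_i(w^\kappa)(\{u:u_0=w_0\})=1$ if $w_i^\kappa(0)=1$, $\frac12$ otherwise; (d) for $\beta<\kappa$, $T_i(w^\kappa)(\{u:u_j^\kappa(\beta)=w_j^\kappa(\beta)\})=1$ if $w_i^\kappa(\beta+1)=1$, $\frac12$ otherwise; (e) for limit $\lambda<\kappa$, $T_i(w^\kappa)(\{u:\lambda\text{-par}(u_j^\kappa)=\lambda\text{-par}(w_j^\kappa)\})=1$ if $w_i^\kappa(\lambda)=1$, $\frac12$ otherwise; (f) for $\beta<\alpha<\kappa$, $E^\beta\subseteq W^\beta$, $u^\kappa\upharpoonright\alpha=w^\kappa\upharpoonright\alpha$ implies equal $T_i$-values on $\pi_{\beta,\kappa}^{-1}(E^\beta)$ (such $T_a,T_b$ exist). $\theta(w^\kappa)=w_0$. $\kappa$-expressions over $\Sigma_S=\mathrm{Pow}(\{h,t\})$,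 $I=\{a,b\}$: least set containing each $E\subseteq\{h,t\}$ and closed under $\neg$, $B_i^p$ ($p\in[0,1]$), and conjunctions of fewer than $\kappa$ (nonempty) expressions. Semantics: $E^{W^\kappa}=\theta^{-1}(E)$, complement, $(B_i^p\varphi)^{W^\kappa}=\{w:T_i(w)(\varphi^{W^\kappa})\ge p\}$, intersection. Depth: $\mathrm{dp}(E)=0$, $\mathrm{dp}(\neg\varphi)=\mathrm{dp}(\varphi)$, $\mathrm{dp}(B_i^p\varphi)=\mathrm{dp}(\varphi)+1$, $\mathrm{dp}(\bigwedge\Psi)=\sup_{\varphi\in\Psi}\mathrm{dp}(\varphi)$. *)

theory Defs
  imports Complex_Main
begin

(* Ordinals below kappa are the elements of a well-ordered type 'k whose order
   type is the regular infinite cardinal kappa (see hypotheses of theorem3). *)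

datatype coin = H | T
datatype player = Pa | Pb

definition other :: "player \<Rightarrow> player" where
  "other i = (if i = Pa then Pb else Pa)"

definition card_lt :: "'a set \<Rightarrow> 'b set \<Rightarrow> bool" where
  "card_lt A B \<longleftrightarrow> \<not> (\<exists>f. inj_on f B \<and> f ` B \<subseteq> A)"

definition kzero :: "'k::wellorder" where
  "kzero = (LEAST x. True)"

definition ksuc :: "'k::wellorder \<Rightarrow> 'k" where
  "ksuc g = (LEAST x. g < x)"

definition klimit :: "'k::wellorder \<Rightarrow> bool" where
  "klimit l \<longleftrightarrow> l \<noteq> kzero \<and> (\<forall>g. l \<noteq> ksuc g)"

definition keven :: "'k::wellorder \<Rightarrow> bool" where
  "keven b \<longleftrightarrow> (\<exists>l n. (l = kzero \<or> klimit l) \<and> b = (ksuc ^^ n) l \<and> even n)"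

definition krecord :: "('k::wellorder \<Rightarrow> bool) \<Rightarrow> bool" where
  "krecord r \<longleftrightarrow>
     (\<forall>l. klimit l \<longrightarrow> (\<exists>g<l. \<forall>b. g \<le> b \<and> b < l \<longrightarrow> \<not> r b)) \<and>
     (\<exists>g. \<forall>b. g \<le> b \<longrightarrow> \<not> r b)"

text \<open>Records of length alpha < kappa, encoded as functions vanishing from alpha on.\<close>
definition record_len :: "'k::wellorder \<Rightarrow> ('k \<Rightarrow> bool) \<Rightarrow> bool" where
  "record_len a r \<longleftrightarrow> (\<forall>x. a \<le> x \<longrightarrow> \<not> r x) \<and>
     (\<forall>l. klimit l \<and> l \<le> a \<longrightarrow> (\<exists>g<l. \<forall>b. g \<le> b \<and> b < l \<longrightarrow> \<not> r b))"

definition olim :: "'k::wellorder \<Rightarrow> ('k \<Rightarrow> bool) \<Rightarrow> 'k" where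
  "olim l r = (LEAST g. g < l \<and> (\<forall>b. g \<le> b \<and> b < l \<longrightarrow> \<not> r b))"

definition lpar :: "'k::wellorder \<Rightarrow> ('k \<Rightarrow> bool) \<Rightarrow> bool" where
  "lpar l r = keven (olim l r)"

type_synonym 'k world = "coin \<times> ('k \<Rightarrow> bool) \<times> ('k \<Rightarrow> bool)"

definition rec :: "player \<Rightarrow> 'k world \<Rightarrow> 'k \<Rightarrow> bool" where
  "rec i w = (if i = Pa then fst (snd w) else snd (snd w))"

definition Wk :: "('k::wellorder) world set" where
  "Wk = {w. krecord (fst (snd w)) \<and> krecord (snd (snd w))}"

text \<open>W^beta for beta < kappa (W^0 encoded with all-zero records).\<close>
definition Wlen :: "'k::wellorder \<Rightarrow> 'k world set" where
  "Wlen a = {w. record_len a (fst (snd w)) \<and> record_len a (snd (snd w))}"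

definition restr :: "'k::wellorder \<Rightarrow> 'k world \<Rightarrow> 'k world" where
  "restr a w = (fst w, \<lambda>x. x < a \<and> fst (snd w) x, \<lambda>x. x < a \<and> snd (snd w) x)"

definition Pset :: "player \<Rightarrow> ('k::wellorder) world \<Rightarrow> 'k world set" where
  "Pset i w = {v \<in> Wk. rec i v = rec i w \<and>
     (rec i w kzero \<longrightarrow> fst v = fst w) \<and>
     (\<forall>b. rec i w (ksuc b) \<longrightarrow> rec (other i) v b = rec (other i) w b) \<and>
     (\<forall>l. klimit l \<and> rec i w l \<longrightarrow> lpar l (rec (other i) v) = lpar l (rec (other i) w))}"

definition fa_prob :: "'a set \<Rightarrow> ('a set \<Rightarrow> real) \<Rightarrow> bool" where
  "fa_prob W \<mu> \<longleftrightarrow> \<mu> W = 1 \<and> (\<forall>A \<subseteq> W. 0 \<le> \<mu> A) \<and>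
     (\<forall>A B. A \<subseteq> W \<longrightarrow> B \<subseteq> W \<longrightarrow> A \<inter> B = {} \<longrightarrow> \<mu> (A \<union> B) = \<mu> A + \<mu> B)"

definition type_maps :: "(player \<Rightarrow> ('k::wellorder) world \<Rightarrow> 'k world set \<Rightarrow> real) \<Rightarrow> bool" where
  "type_maps Tm \<longleftrightarrow> (\<forall>i. \<forall>w \<in> Wk. let j = other i in
     fa_prob Wk (Tm i w) \<and>
     (\<forall>v \<in> Pset i w. Tm i v = Tm i w) \<and>
     Tm i w (Pset i w) = 1 \<and>
     Tm i w {u \<in> Wk. fst u = fst w} = (if rec i w kzero then 1 else 1/2) \<and>
     (\<forall>b. Tm i w {u \<in> Wk. rec j u b = rec j w b} = (if rec i w (ksuc b) then 1 else 1/2)) \<and>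
     (\<forall>l. klimit l \<longrightarrow> Tm i w {u \<in> Wk. lpar l (rec j u) = lpar l (rec j w)} =
        (if rec i w l then 1 else 1/2)) \<and>
     (\<forall>b a E u. b < a \<and> E \<subseteq> Wlen b \<and> u \<in> Wk \<and> restr a u = restr a w \<longrightarrow>
        Tm i u {v \<in> Wk. restr b v \<in> E} = Tm i w {v \<in> Wk. restr b v \<in> E}))"

text \<open>Raw kappa-expressions; Conj I f denotes the conjunction of the set f ` I.\<close>
datatype 'k expr = Atom "coin set" | Neg "'k expr" | Bel player real "'k expr"
  | Conj "'k set" "'k \<Rightarrow> 'k expr"

primrec wf_expr :: "('k::wellorder) expr \<Rightarrow> bool" where
  "wf_expr (Atom E) = True"
| "wf_expr (Neg \<phi>) = wf_expr \<phi>"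
| "wf_expr (Bel i p \<phi>) = (0 \<le> p \<and> p \<le> 1 \<and> wf_expr \<phi>)"
| "wf_expr (Conj I f) = (I \<noteq> {} \<and> card_lt (f ` I) (UNIV :: 'k set) \<and> (\<forall>x\<in>I. (wf_expr \<circ> f) x))"

primrec dp :: "('k::wellorder) expr \<Rightarrow> 'k" where
  "dp (Atom E) = kzero"
| "dp (Neg \<phi>) = dp \<phi>"
| "dp (Bel i p \<phi>) = ksuc (dp \<phi>)"
| "dp (Conj I f) = (LEAST y. \<forall>x\<in>I. (dp \<circ> f) x \<le> y)"

primrec sem :: "(player \<Rightarrow> ('k::wellorder) world \<Rightarrow> 'k world set \<Rightarrow> real) \<Rightarrow> 'k expr \<Rightarrow> 'k world set" where
  "sem Tm (Atom E) = {w \<in> Wk. fst w \<in> E}"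
| "sem Tm (Neg \<phi>) = Wk - sem Tm \<phi>"
| "sem Tm (Bel i p \<phi>) = {w \<in> Wk. p \<le> Tm i w (sem Tm \<phi>)}"
| "sem Tm (Conj I f) = Wk \<inter> (\<Inter>x\<in>I. (sem Tm \<circ> f) x)"

end

theory Submission
  imports Defs
begin

lemma kzero_le: "kzero \<le> (x::'k::wellorder)"
  unfolding kzero_def by (rule Least_le) simp

lemma card_lt_finite:
  assumes "infinite (UNIV::'k set)" "finite S"
  shows "card_lt S (UNIV::'k set)"
  unfolding card_lt_def
proof
  assume "\<exists>f. inj_on f (UNIV::'k set) \<and> f ` UNIV \<subseteq> S"
  then obtain f where f: "inj_on f (UNIV::'k set)" "f ` UNIV \<subseteq> S" by blast
  then have "finite (f ` UNIV)" using assms(2) finite_subset by blast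
  then have "finite (UNIV::'k set)" using f finite_imageD by blast
  then show False using assms(1) by simp
qed

lemma card_lt_image:
  assumes "card_lt A U" shows "card_lt (f ` A) U"
  unfolding card_lt_def
proof
  assume "\<exists>g. inj_on g U \<and> g ` U \<subseteq> f ` A"
  then obtain g where g: "inj_on g U" "g ` U \<subseteq> f ` A" by blast
  have "inj_on (inv_into A f \<circ> g) U"
    using g by (meson comp_inj_on inj_on_inv_into)
  moreover have "(inv_into A f \<circ> g) ` U \<subseteq> A"
  proof
    fix y assume "y \<in> (inv_into A f \<circ> g) ` U"
    then obtain x where x: "x \<in> U" "y = inv_into A f (g x)" by auto
    then have "g x \<in> f ` A" using g by blast
    then show "y \<in> A" using x by (simp add: inv_into_into)
  qed
  ultimately show False using assms unfolding card_lt_def by blast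
qed

lemma limit_pos: "klimit l \<Longrightarrow> kzero < (l::'k::wellorder)"
  using kzero_le klimit_def order.order_iff_strict by metis

lemma keven_zero: "keven kzero"
  unfolding keven_def by (rule exI[of _ kzero], rule exI[of _ 0]) simp

lemma sem_sub: "sem Tm \<phi> \<subseteq> Wk"
  by (induction \<phi>) auto

lemma fa_compl: "fa_prob W \<mu> \<Longrightarrow> A \<subseteq> W \<Longrightarrow> \<mu> (W - A) = 1 - \<mu> A"
  unfolding fa_prob_def
  by (metis Diff_disjoint Diff_partition Diff_subset add_diff_cancel_left')

lemma restr_mono:
  assumes h: "restr c u = restr c w" and bc: "b \<le> c"
  shows "restr b u = restr b w"
proof -
  have e0: "fst u = fst w" using h by (simp add: restr_def)
  have e1: "(\<lambda>x. x < c \<and> fst (snd u) x) = (\<lambda>x. x < c \<and> fst (snd w) x)" using h by (simp add: restr_def)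
  have e2: "(\<lambda>x. x < c \<and> snd (snd u) x) = (\<lambda>x. x < c \<and> snd (snd w) x)" using h by (simp add: restr_def)
  have f1: "fst (snd u) x = fst (snd w) x" if "x < b" for x
  proof -
    have "x < c" using that bc by (rule less_le_trans)
    then show ?thesis using fun_cong[OF e1, of x] by simp
  qed
  have f2: "snd (snd u) x = snd (snd w) x" if "x < b" for x
  proof -
    have "x < c" using that bc by (rule less_le_trans)
    then show ?thesis using fun_cong[OF e2, of x] by simp
  qed
  show ?thesis unfolding restr_def using e0 f1 f2 by (auto simp: fun_eq_iff)
qed

lemma rec_krecord: "w \<in> Wk \<Longrightarrow> krecord (rec i w)"
  unfolding Wk_def rec_def by auto

lemma restr_Wlen: "v \<in> Wk \<Longrightarrow> restr b v \<in> Wlen b"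
  unfolding Wk_def Wlen_def restr_def record_len_def krecord_def by auto blast+

definition Or :: "'k::wellorder expr \<Rightarrow> 'k expr \<Rightarrow> 'k expr" where
  "Or a b = Neg (Conj UNIV (\<lambda>x. if x = kzero then Neg a else Neg b))"

definition Kn :: "player \<Rightarrow> 'k::wellorder expr \<Rightarrow> 'k expr" where
  "Kn j a = Or (Bel j 1 a) (Bel j 1 (Neg a))"

lemma dp_conj_bound:
  assumes "\<forall>x\<in>I. dp (f x) \<le> (c::'k::wellorder)"
  shows "dp (Conj I f) \<le> c" "\<forall>x\<in>I. dp (f x) \<le> dp (Conj I f)"
proof -
  have ex: "\<exists>y. \<forall>x\<in>I. (dp \<circ> f) x \<le> y" using assms by auto
  show "dp (Conj I f) \<le> c" using assms by (simp add: Least_le)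
  show "\<forall>x\<in>I. dp (f x) \<le> dp (Conj I f)" using LeastI_ex[OF ex] by simp
qed

lemma dp_conj_eq:
  assumes "x0 \<in> I" "\<forall>x\<in>I. dp (f x) = (c::'k::wellorder)"
  shows "dp (Conj I f) = c"
  using dp_conj_bound[of I f c] assms by (metis order.refl order_antisym)


lemma olim_zero:
  assumes "klimit l" "\<forall>d<l. \<not> r d"
  shows "olim l r = kzero"
  unfolding olim_def by (rule Least_equality) (use assms limit_pos kzero_le in auto)

context
  fixes Tm :: "player \<Rightarrow> ('k::wellorder) world \<Rightarrow> 'k world set \<Rightarrow> real"
  assumes inf: "infinite (UNIV :: 'k set)"
    and card: "\<forall>x::'k. card_lt {..<x} (UNIV :: 'k set)"
    and regular: "\<forall>A::'k set. card_lt A (UNIV :: 'k set) \<longrightarrow> (\<exists>b. \<forall>a\<in>A. a < b)"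
    and TT: "type_maps Tm"
begin

lemma no_max: "\<exists>y. (x::'k) < y"
  using regular card_lt_finite[OF inf, of "{x}"] by auto

lemma ksuc_gt: "x < ksuc (x::'k)"
  unfolding ksuc_def using no_max[of x] by (rule LeastI_ex)

lemma ksuc_le: "x < y \<Longrightarrow> ksuc x \<le> (y::'k)"
  unfolding ksuc_def by (rule Least_le)

lemma less_ksuc_iff: "y < ksuc x \<longleftrightarrow> y \<le> (x::'k)"
  using ksuc_gt ksuc_le by (meson leD le_less_trans not_le)

lemma limit_ksuc: "klimit l \<Longrightarrow> x < l \<Longrightarrow> ksuc x < (l::'k)"
  using ksuc_le[of x l] klimit_def by (metis order.order_iff_strict)

lemma olim_succ:
  assumes "klimit l" "g < l" "r g" "\<forall>d. g < d \<and> d < l \<longrightarrow> \<not> r d"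
  shows "olim l r = ksuc (g::'k)"
  unfolding olim_def
proof (rule Least_equality)
  show "ksuc g < l \<and> (\<forall>b. ksuc g \<le> b \<and> b < l \<longrightarrow> \<not> r b)"
    using assms limit_ksuc ksuc_gt by (meson less_le_trans)
  fix y assume y: "y < l \<and> (\<forall>b. y \<le> b \<and> b < l \<longrightarrow> \<not> r b)"
  then have "\<not> y \<le> g" using assms by auto
  then show "ksuc g \<le> y" using ksuc_le by (simp add: not_le)
qed

lemma olim_cases:
  assumes "klimit l" "krecord r"
  shows "(\<forall>d<l. \<not> r d) \<or> (\<exists>g<l. r g \<and> (\<forall>d. g < d \<and> d < l \<longrightarrow> \<not> r (d::'k)))"
proof (cases "\<forall>d<l. \<not> r d")
  case True then show ?thesis by blast
next
  case False
  then have nz: "\<not> (\<forall>d<l. \<not> r d)" .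
  define P where "P = (\<lambda>g. g < l \<and> (\<forall>b. g \<le> b \<and> b < l \<longrightarrow> \<not> r b))"
  obtain g0 where g0: "P g0" using assms unfolding krecord_def P_def by blast
  define oo where "oo = Least P"
  have Po: "P oo" using LeastI[of P, OF g0] oo_def by simp
  have min: "\<And>y. P y \<Longrightarrow> oo \<le> y" unfolding oo_def by (rule Least_le)
  have nz0: "oo \<noteq> kzero"
  proof
    assume "oo = kzero"
    then have "\<forall>d<l. \<not> r d" using Po kzero_le unfolding P_def by metis
    then show False using nz by simp
  qed
  have nl: "\<not> klimit oo"
  proof
    assume lo: "klimit oo"
    then obtain g' where g': "g' < oo" "\<forall>b. g' \<le> b \<and> b < oo \<longrightarrow> \<not> r b"
      using assms(2) unfolding krecord_def by blast
    have "P g'" unfolding P_def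
    proof (intro conjI allI impI)
      show "g' < l" using g' Po unfolding P_def by (meson less_trans)
      fix b assume b: "g' \<le> b \<and> b < l"
      show "\<not> r b"
      proof (cases "b < oo")
        case True then show ?thesis using g' b by blast
      next
        case False then show ?thesis using Po b unfolding P_def by (simp add: not_less)
      qed
    qed
    then have "oo \<le> g'" by (rule min)
    then show False using g' by simp
  qed
  then obtain g where g: "oo = ksuc g" using nz0 unfolding klimit_def by blast
  have gl: "g < l" using Po g ksuc_gt unfolding P_def by (meson less_trans)
  have rg: "r g"
  proof (rule ccontr)
    assume "\<not> r g"
    then have "P g" unfolding P_def using gl Po g ksuc_le
      by (metis P_def order.order_iff_strict)
    then have "oo \<le> g" by (rule min)
    then show False using g ksuc_gt[of g] by (simp add: leD)
  qed
  have "\<forall>d. g < d \<and> d < l \<longrightarrow> \<not> r d" using Po g ksuc_le unfolding P_def by blast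
  then show ?thesis using gl rg by blast
qed

lemma lpar_iff:
  assumes "klimit l" "krecord r"
  shows "lpar l r \<longleftrightarrow> (\<forall>d<l. \<not> r d) \<or>
            (\<exists>g<l. keven (ksuc g) \<and> r g \<and> (\<forall>d. g < d \<and> d < l \<longrightarrow> \<not> r (d::'k)))"
proof
  assume lp: "lpar l r"
  from olim_cases[OF assms] show "(\<forall>d<l. \<not> r d) \<or>
            (\<exists>g<l. keven (ksuc g) \<and> r g \<and> (\<forall>d. g < d \<and> d < l \<longrightarrow> \<not> r (d::'k)))"
  proof
    assume "\<exists>g<l. r g \<and> (\<forall>d. g < d \<and> d < l \<longrightarrow> \<not> r d)"
    then obtain g where g: "g < l" "r g" "\<forall>d. g < d \<and> d < l \<longrightarrow> \<not> r d" by blast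
    then have "olim l r = ksuc g" using olim_succ assms by blast
    then show ?thesis using lp g unfolding lpar_def by auto
  qed simp
next
  assume "(\<forall>d<l. \<not> r d) \<or>
            (\<exists>g<l. keven (ksuc g) \<and> r g \<and> (\<forall>d. g < d \<and> d < l \<longrightarrow> \<not> r (d::'k)))"
  then show "lpar l r"
  proof
    assume "\<forall>d<l. \<not> r d"
    then show ?thesis unfolding lpar_def using olim_zero assms keven_zero by metis
  next
    assume "\<exists>g<l. keven (ksuc g) \<and> r g \<and> (\<forall>d. g < d \<and> d < l \<longrightarrow> \<not> r (d::'k))"
    then obtain g where g: "g < l" "keven (ksuc g)" "r g" "\<forall>d. g < d \<and> d < l \<longrightarrow> \<not> r d" by blast
    then have "olim l r = ksuc g" using olim_succ assms by blast
    then show ?thesis using g unfolding lpar_def by auto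
  qed
qed


lemma TT_fa: "w \<in> Wk \<Longrightarrow> fa_prob Wk (Tm i w)"
  using TT unfolding type_maps_def Let_def by blast

lemma TT_coin: "w \<in> Wk \<Longrightarrow> Tm i w {u \<in> Wk. fst u = fst w} = (if rec i w kzero then 1 else 1/2)"
  using TT unfolding type_maps_def Let_def by blast

lemma TT_bit: "w \<in> Wk \<Longrightarrow> Tm i w {u \<in> Wk. rec (other i) u b = rec (other i) w b}
    = (if rec i w (ksuc b) then 1 else 1/2)"
  using TT unfolding type_maps_def Let_def by blast

lemma TT_lim: "w \<in> Wk \<Longrightarrow> klimit l \<Longrightarrow> Tm i w {u \<in> Wk. lpar l (rec (other i) u) = lpar l (rec (other i) w)}
    = (if rec i w l then 1 else 1/2)"
  using TT unfolding type_maps_def Let_def by blast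

lemma TT_restr: "w \<in> Wk \<Longrightarrow> b < a \<Longrightarrow> E \<subseteq> Wlen b \<Longrightarrow> u \<in> Wk \<Longrightarrow> restr a u = restr a w \<Longrightarrow>
    Tm i u {v \<in> Wk. restr b v \<in> E} = Tm i w {v \<in> Wk. restr b v \<in> E}"
  using TT unfolding type_maps_def Let_def by blast

lemma other_k: "\<exists>x::'k. x \<noteq> kzero"
  using ksuc_gt[of kzero] by (metis less_irrefl)

lemma finite_img_Or: "finite (range (\<lambda>x. if x = kzero then Neg a else Neg (b::'k expr)))"
proof -
  have "range (\<lambda>x. if x = kzero then Neg a else Neg (b::'k expr)) \<subseteq> {Neg a, Neg b}" by auto
  then show ?thesis by (rule finite_subset) simp
qed

lemma wf_Or: "wf_expr a \<Longrightarrow> wf_expr b \<Longrightarrow> wf_expr (Or a (b::'k expr))"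
  unfolding Or_def using card_lt_finite[OF inf finite_img_Or] by auto

lemma sem_Or: "sem Tm (Or a b) = sem Tm a \<union> sem Tm (b::'k expr)"
proof -
  obtain x1 where x1: "x1 \<noteq> (kzero::'k)" using other_k by blast
  have "sem Tm (Or a b) = Wk - (Wk \<inter> ((Wk - sem Tm a) \<inter> (Wk - sem Tm b)))"
    unfolding Or_def using x1 by (auto split: if_splits)
  then show ?thesis using sem_sub[of Tm a] sem_sub[of Tm b] by blast
qed

lemma dp_Or: "dp (Or a b) = max (dp a) (dp (b::'k expr))"
proof -
  obtain x1 where x1: "x1 \<noteq> (kzero::'k)" using other_k by blast
  let ?f = "\<lambda>x. if x = kzero then Neg a else Neg (b::'k expr)"
  have b: "\<forall>x\<in>UNIV. dp (?f x) \<le> max (dp a) (dp b)" by auto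
  have le: "dp (Conj UNIV ?f) \<le> max (dp a) (dp b)" using dp_conj_bound(1)[OF b] .
  note ge = dp_conj_bound(2)[OF b]
  have "dp a \<le> dp (Conj UNIV ?f)" using ge[rule_format, of kzero] by simp
  moreover have "dp b \<le> dp (Conj UNIV ?f)" using ge[rule_format, of x1] x1 by simp
  moreover have e: "dp (Or a b) = dp (Conj UNIV ?f)" unfolding Or_def by (simp only: dp.simps(2))
  ultimately show ?thesis using le by (metis antisym max.boundedI)
qed

lemma wf_Kn: "wf_expr a \<Longrightarrow> wf_expr (Kn j (a::'k expr))"
  unfolding Kn_def by (rule wf_Or) auto

lemma dp_Kn: "dp (Kn j a) = ksuc (dp (a::'k expr))"
  unfolding Kn_def dp_Or by simp

lemma sem_Kn:
  assumes v: "v \<in> Wk" and X: "X = sem Tm a \<or> X = Wk - sem Tm (a::'k expr)"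
    and TX: "Tm j v X = (if P then 1 else 1/2)"
  shows "v \<in> sem Tm (Kn j a) \<longleftrightarrow> P"
proof -
  have fa: "fa_prob Wk (Tm j v)" using TT_fa v .
  have c: "Tm j v (Wk - sem Tm a) = 1 - Tm j v (sem Tm a)"
    using fa_compl[OF fa sem_sub] .
  have "v \<in> sem Tm (Kn j a) \<longleftrightarrow> 1 \<le> Tm j v (sem Tm a) \<or> 1 \<le> Tm j v (Wk - sem Tm a)"
    unfolding Kn_def sem_Or using v by simp
  then show ?thesis using X TX c by (cases P) auto
qed

lemma sem_restr:
  "wf_expr \<phi> \<Longrightarrow> u \<in> Wk \<Longrightarrow> w \<in> Wk \<Longrightarrow> restr (dp \<phi>) u = restr (dp \<phi>) w \<Longrightarrow>
     (u \<in> sem Tm \<phi> \<longleftrightarrow> w \<in> sem Tm (\<phi>::'k expr))"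
proof (induction \<phi> arbitrary: u w)
  case (Atom E)
  then have "fst u = fst w" by (simp add: restr_def)
  then show ?case using Atom by simp
next
  case (Neg \<phi>)
  have "u \<in> sem Tm \<phi> \<longleftrightarrow> w \<in> sem Tm \<phi>" using Neg.IH[of u w] Neg.prems by simp
  then show ?case using Neg.prems(2,3) by simp
next
  case (Bel i p \<phi>)
  let ?b = "dp \<phi>"
  let ?E = "restr ?b ` sem Tm \<phi>"
  have wf: "wf_expr \<phi>" using Bel by simp
  have E: "?E \<subseteq> Wlen ?b" using restr_Wlen sem_sub by blast
  have eq: "sem Tm \<phi> = {v \<in> Wk. restr ?b v \<in> ?E}"
  proof
    show "sem Tm \<phi> \<subseteq> {v \<in> Wk. restr ?b v \<in> ?E}" using sem_sub by blast
    show "{v \<in> Wk. restr ?b v \<in> ?E} \<subseteq> sem Tm \<phi>"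
    proof
      fix v assume "v \<in> {v \<in> Wk. restr ?b v \<in> ?E}"
      then obtain v' where v': "v \<in> Wk" "v' \<in> sem Tm \<phi>" "restr ?b v = restr ?b v'" by auto
      then show "v \<in> sem Tm \<phi>" using Bel.IH[OF wf, of v' v] sem_sub by auto
    qed
  qed
  have "Tm i u (sem Tm \<phi>) = Tm i w (sem Tm \<phi>)"
    using TT_restr[OF Bel.prems(3) ksuc_gt E Bel.prems(2)] Bel.prems(4) eq by simp
  then show ?case using Bel.prems by simp
next
  case (Conj I f)
  have wf: "I \<noteq> {}" "card_lt (f ` I) (UNIV::'k set)" "\<forall>x\<in>I. wf_expr (f x)" using Conj.prems by auto
  have "card_lt (dp ` (f ` I)) (UNIV::'k set)" using card_lt_image[OF wf(2)] .
  then obtain c where c: "\<forall>a\<in>dp ` (f ` I). a < c" using regular by blast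
  then have "\<forall>x\<in>I. dp (f x) \<le> c" by auto
  then have le: "\<forall>x\<in>I. dp (f x) \<le> dp (Conj I f)" by (rule dp_conj_bound(2))
  have "\<forall>x\<in>I. (u \<in> sem Tm (f x) \<longleftrightarrow> w \<in> sem Tm (f x))"
  proof
    fix x assume x: "x \<in> I"
    have "restr (dp (f x)) u = restr (dp (f x)) w"
      using restr_mono[OF Conj.prems(4)] le x by blast
    then show "u \<in> sem Tm (f x) \<longleftrightarrow> w \<in> sem Tm (f x)"
      using Conj.IH[of "f x" u w] x wf Conj.prems(2,3) by simp
  qed
  then show ?case using Conj.prems(2,3) by auto
qed


lemma coin_neq_H [simp]: "x \<noteq> H \<longleftrightarrow> x = T"
  by (cases x) auto

lemma single_Wk: "(c, \<lambda>x. x = (\<alpha>::'k), \<lambda>x. False) \<in> Wk"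
proof -
  have "krecord (\<lambda>x. x = \<alpha>)" unfolding krecord_def
  proof (intro conjI allI impI)
    fix l :: 'k assume l: "klimit l"
    show "\<exists>g<l. \<forall>b. g \<le> b \<and> b < l \<longrightarrow> \<not> b = \<alpha>"
    proof (cases "\<alpha> < l")
      case True
      then show ?thesis using limit_ksuc[OF l True] ksuc_gt[of \<alpha>]
        by (metis leD less_le_trans)
    next
      case False
      then show ?thesis using limit_pos[OF l] by (metis not_less order.strict_trans1)
    qed
  next
    show "\<exists>g. \<forall>b. g \<le> b \<longrightarrow> \<not> b = \<alpha>" using ksuc_gt[of \<alpha>] by (metis leD less_le_trans)
  qed
  moreover have "krecord (\<lambda>x::'k. False)" unfolding krecord_def using limit_pos by blast
  ultimately show ?thesis unfolding Wk_def by simp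
qed

lemma pi_exists:
  assumes l: "klimit (l::'k)"
    and F: "\<forall>d<l. wf_expr (F d) \<and> dp (F d) = ksuc d \<and> sem Tm (F d) = {u \<in> Wk. rec k u d}"
  shows "\<exists>p. wf_expr p \<and> dp p = l \<and> sem Tm p = {u \<in> Wk. lpar l (rec k u)}"
proof -
  have l0: "kzero \<in> {..<l}" using limit_pos[OF l] by simp
  define Z where "Z = Conj {..<l} (\<lambda>d. Neg (F d))"
  define D where "D = (\<lambda>g. Conj {..<l} (\<lambda>d. if d = g then F g else if g < d then Neg (F d) else Atom UNIV))"
  define f where "f = (\<lambda>g. if keven (ksuc g) then Or (D g) Z else Z)"
  define p where "p = Neg (Conj {..<l} (\<lambda>g. Neg (f g)))"
  have cl: "\<And>h. card_lt (h ` {..<l}) (UNIV::'k set)" using card card_lt_image by blast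
  have wfC: "\<And>h. (\<And>d. d < l \<Longrightarrow> wf_expr (h d)) \<Longrightarrow> wf_expr (Conj {..<l} h)"
    using l0 cl by auto
  have wfZ: "wf_expr Z" unfolding Z_def using F by (intro wfC) auto
  have wfD: "\<And>g. g < l \<Longrightarrow> wf_expr (D g)" unfolding D_def using F by (intro wfC) auto
  have wff: "\<And>g. g < l \<Longrightarrow> wf_expr (f g)" unfolding f_def using wfZ wfD wf_Or by auto
  have wfp: "wf_expr p" unfolding p_def by (simp only: wf_expr.simps(2), rule wfC) (simp add: wff)
  have dZ: "dp Z = l"
  proof -
    have b: "\<forall>d\<in>{..<l}. dp (Neg (F d)) \<le> l" using F limit_ksuc[OF l] by (simp add: less_imp_le)
    have le: "dp Z \<le> l" unfolding Z_def by (rule dp_conj_bound(1)[OF b])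
    have ge: "\<forall>d\<in>{..<l}. ksuc d \<le> dp Z" using dp_conj_bound(2)[OF b] F unfolding Z_def by simp
    have "\<not> dp Z < l"
    proof
      assume "dp Z < l"
      then have "ksuc (dp Z) \<le> dp Z" using ge by simp
      then show False using ksuc_gt[of "dp Z"] by (simp add: leD)
    qed
    then show ?thesis using le by simp
  qed
  have dD: "\<And>g. g < l \<Longrightarrow> dp (D g) \<le> l"
  proof -
    fix g assume g: "g < l"
    have "\<forall>d\<in>{..<l}. dp (if d = g then F g else if g < d then Neg (F d) else Atom UNIV) \<le> l"
      using F g limit_ksuc[OF l] kzero_le by (auto simp: less_imp_le)
    then show "dp (D g) \<le> l" unfolding D_def by (rule dp_conj_bound(1))
  qed
  have df: "\<forall>g\<in>{..<l}. dp (Neg (f g)) = l" using dZ dD unfolding f_def by (auto simp: dp_Or max_def)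
  have dpp: "dp p = l" unfolding p_def using dp_conj_eq[OF l0 df] by simp
  have sZ: "\<And>u. u \<in> Wk \<Longrightarrow> u \<in> sem Tm Z \<longleftrightarrow> (\<forall>d<l. \<not> rec k u d)"
    unfolding Z_def using F by auto
  have sD: "\<And>u g. u \<in> Wk \<Longrightarrow> g < l \<Longrightarrow>
      u \<in> sem Tm (D g) \<longleftrightarrow> rec k u g \<and> (\<forall>d. g < d \<and> d < l \<longrightarrow> \<not> rec k u d)"
  proof -
    fix u :: "'k world" and g assume u: "u \<in> Wk" and g: "g < l"
    have "u \<in> sem Tm (D g) \<longleftrightarrow> (\<forall>d<l. (d = g \<longrightarrow> u \<in> sem Tm (F g)) \<and>
        (d \<noteq> g \<and> g < d \<longrightarrow> u \<notin> sem Tm (F d)))"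
      unfolding D_def using u by auto
    also have "\<dots> \<longleftrightarrow> rec k u g \<and> (\<forall>d. g < d \<and> d < l \<longrightarrow> \<not> rec k u d)"
      using F g u by auto
    finally show "u \<in> sem Tm (D g) \<longleftrightarrow> rec k u g \<and> (\<forall>d. g < d \<and> d < l \<longrightarrow> \<not> rec k u d)" .
  qed
  have sp: "\<And>u. u \<in> Wk \<Longrightarrow> u \<in> sem Tm p \<longleftrightarrow> (\<exists>g<l. u \<in> sem Tm (f g))"
    unfolding p_def by auto
  have key: "\<And>u. u \<in> Wk \<Longrightarrow> u \<in> sem Tm p \<longleftrightarrow> lpar l (rec k u)"
  proof -
    fix u :: "'k world" assume u: "u \<in> Wk"
    have "u \<in> sem Tm p \<longleftrightarrow> (\<exists>g<l. (keven (ksuc g) \<and> u \<in> sem Tm (D g)) \<or> u \<in> sem Tm Z)"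
      using sp[OF u] unfolding f_def by (auto simp: sem_Or)
    also have "\<dots> \<longleftrightarrow> u \<in> sem Tm Z \<or> (\<exists>g<l. keven (ksuc g) \<and> u \<in> sem Tm (D g))"
      using l0 by auto
    also have "\<dots> \<longleftrightarrow> lpar l (rec k u)"
      using lpar_iff[OF l rec_krecord[OF u]] sZ[OF u] sD[OF u] by auto
    finally show "u \<in> sem Tm p \<longleftrightarrow> lpar l (rec k u)" .
  qed
  have "sem Tm p = {u \<in> Wk. lpar l (rec k u)}" using key sem_sub by blast
  then show ?thesis using wfp dpp by blast
qed

lemma chi_exists: "\<forall>j. \<exists>c. wf_expr c \<and> dp c = ksuc \<beta> \<and> sem Tm c = {v \<in> Wk. rec j v (\<beta>::'k)}"
proof (induction \<beta> rule: less_induct)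
  case (less \<beta>)
  show ?case
  proof
    fix j
    consider (z) "\<beta> = kzero" | (s) g where "\<beta> = ksuc g" | (l) "klimit \<beta>" unfolding klimit_def by blast
    then show "\<exists>c. wf_expr c \<and> dp c = ksuc \<beta> \<and> sem Tm c = {v \<in> Wk. rec j v \<beta>}"
    proof cases
      case z
      let ?a = "Atom {H} :: 'k expr"
      have "\<And>v. v \<in> Wk \<Longrightarrow> v \<in> sem Tm (Kn j ?a) \<longleftrightarrow> rec j v kzero"
      proof -
        fix v :: "'k world" assume v: "v \<in> Wk"
        have X: "{u\<in>Wk. fst u = fst v} = sem Tm ?a \<or> {u\<in>Wk. fst u = fst v} = Wk - sem Tm ?a"
          by (cases "fst v") auto
        show "v \<in> sem Tm (Kn j ?a) \<longleftrightarrow> rec j v kzero" by (rule sem_Kn[OF v X TT_coin[OF v]])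
      qed
      then have "sem Tm (Kn j ?a) = {v \<in> Wk. rec j v \<beta>}" using sem_sub z by blast
      moreover have "wf_expr (Kn j ?a)" by (rule wf_Kn) simp
      moreover have "dp (Kn j ?a) = ksuc \<beta>" using z by (simp add: dp_Kn)
      ultimately show ?thesis by blast
    next
      case s
      have "g < \<beta>" using s ksuc_gt by simp
      then obtain c where c: "wf_expr c" "dp c = ksuc g" "sem Tm c = {v \<in> Wk. rec (other j) v g}"
        using less by blast
      have "\<And>v. v \<in> Wk \<Longrightarrow> v \<in> sem Tm (Kn j c) \<longleftrightarrow> rec j v (ksuc g)"
      proof -
        fix v :: "'k world" assume v: "v \<in> Wk"
        have X: "{u\<in>Wk. rec (other j) u g = rec (other j) v g} = sem Tm c \<or>
                 {u\<in>Wk. rec (other j) u g = rec (other j) v g} = Wk - sem Tm c"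
          using c by (cases "rec (other j) v g") auto
        show "v \<in> sem Tm (Kn j c) \<longleftrightarrow> rec j v (ksuc g)" by (rule sem_Kn[OF v X TT_bit[OF v]])
      qed
      then have "sem Tm (Kn j c) = {v \<in> Wk. rec j v \<beta>}" using sem_sub s by blast
      moreover have "wf_expr (Kn j c)" using c by (simp add: wf_Kn)
      moreover have "dp (Kn j c) = ksuc \<beta>" using c s by (simp add: dp_Kn)
      ultimately show ?thesis by blast
    next
      case l
      have "\<forall>d\<in>{..<\<beta>}. \<exists>c. wf_expr c \<and> dp c = ksuc d \<and> sem Tm c = {u \<in> Wk. rec (other j) u d}"
        using less by blast
      from bchoice[OF this] obtain F where "\<forall>d\<in>{..<\<beta>}. wf_expr (F d) \<and> dp (F d) = ksuc d \<and> sem Tm (F d) = {u \<in> Wk. rec (other j) u d}"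
        by blast
      then have "\<forall>d<\<beta>. wf_expr (F d) \<and> dp (F d) = ksuc d \<and> sem Tm (F d) = {u \<in> Wk. rec (other j) u d}"
        by simp
      from pi_exists[OF l this] obtain p where p: "wf_expr p" "dp p = \<beta>"
         "sem Tm p = {u \<in> Wk. lpar \<beta> (rec (other j) u)}" by blast
      have "\<And>v. v \<in> Wk \<Longrightarrow> v \<in> sem Tm (Kn j p) \<longleftrightarrow> rec j v \<beta>"
      proof -
        fix v :: "'k world" assume v: "v \<in> Wk"
        have X: "{u\<in>Wk. lpar \<beta> (rec (other j) u) = lpar \<beta> (rec (other j) v)} = sem Tm p \<or>
                 {u\<in>Wk. lpar \<beta> (rec (other j) u) = lpar \<beta> (rec (other j) v)} = Wk - sem Tm p"
          using p by (cases "lpar \<beta> (rec (other j) v)") auto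
        show "v \<in> sem Tm (Kn j p) \<longleftrightarrow> rec j v \<beta>" by (rule sem_Kn[OF v X TT_lim[OF v l]])
      qed
      then have "sem Tm (Kn j p) = {v \<in> Wk. rec j v \<beta>}" using sem_sub by blast
      moreover have "wf_expr (Kn j p)" using p by (simp add: wf_Kn)
      moreover have "dp (Kn j p) = ksuc \<beta>" using p by (simp add: dp_Kn)
      ultimately show ?thesis by blast
    qed
  qed
qed

end

theorem theorem3:
  fixes Tm :: "player \<Rightarrow> ('k::wellorder) world \<Rightarrow> 'k world set \<Rightarrow> real"
  assumes inf: "infinite (UNIV :: 'k set)"
    and card: "\<forall>x::'k. card_lt {..<x} (UNIV :: 'k set)"
    and regular: "\<forall>A::'k set. card_lt A (UNIV :: 'k set) \<longrightarrow> (\<exists>b. \<forall>a\<in>A. a < b)"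
    and TT: "type_maps Tm"
  shows "\<forall>\<alpha>::'k. \<exists>u\<in>Wk. \<exists>w\<in>Wk.
           (\<forall>\<phi>. wf_expr \<phi> \<and> dp \<phi> \<le> \<alpha> \<longrightarrow> (u \<in> sem Tm \<phi> \<longleftrightarrow> w \<in> sem Tm \<phi>)) \<and>
           (\<exists>\<psi>. wf_expr \<psi> \<and> dp \<psi> = ksuc \<alpha> \<and> u \<in> sem Tm \<psi> \<and> w \<in> sem Tm (Neg \<psi>))"
proof
  fix \<alpha> :: 'k
  define u :: "'k world" where "u = (H, \<lambda>x. x = \<alpha>, \<lambda>x. False)"
  define w :: "'k world" where "w = (H, \<lambda>x. x = \<alpha> \<and> False, \<lambda>x. False)"
  have uW: "u \<in> Wk" unfolding u_def by (rule single_Wk[OF inf card regular TT])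
  have wW: "w \<in> Wk"
  proof -
    have "(H, \<lambda>x. x = \<alpha>, \<lambda>x. False) \<in> (Wk :: 'k world set)" by (rule single_Wk[OF inf card regular TT])
    then show ?thesis unfolding w_def Wk_def krecord_def by auto
  qed
  have r: "restr \<alpha> u = restr \<alpha> w" unfolding u_def w_def restr_def by auto
  have P1: "\<forall>\<phi>. wf_expr \<phi> \<and> dp \<phi> \<le> \<alpha> \<longrightarrow> (u \<in> sem Tm \<phi> \<longleftrightarrow> w \<in> sem Tm \<phi>)"
    using sem_restr[OF inf card regular TT] restr_mono[OF r] uW wW by blast
  obtain c where c: "wf_expr c" "dp c = ksuc \<alpha>" "sem Tm c = {v \<in> Wk. rec Pa v \<alpha>}"
    using chi_exists[OF inf card regular TT] by blast
  have P2: "\<exists>\<psi>. wf_expr \<psi> \<and> dp \<psi> = ksuc \<alpha> \<and> u \<in> sem Tm \<psi> \<and> w \<in> sem Tm (Neg \<psi>)"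
    using c uW wW by (intro exI[of _ c]) (auto simp: u_def w_def rec_def)
  show "\<exists>u\<in>Wk. \<exists>w\<in>Wk.
           (\<forall>\<phi>. wf_expr \<phi> \<and> dp \<phi> \<le> \<alpha> \<longrightarrow> (u \<in> sem Tm \<phi> \<longleftrightarrow> w \<in> sem Tm \<phi>)) \<and>
           (\<exists>\<psi>. wf_expr \<psi> \<and> dp \<psi> = ksuc \<alpha> \<and> u \<in> sem Tm \<psi> \<and> w \<in> sem Tm (Neg \<psi>))"
    using P1 P2 uW wW by blast
qed

end
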